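(* For every finite chain ring $R$ and every $k\ge1$, the linear simplex code $\mathcal{S}_k^\alpha$ is not optimal with respect to the Griesmer bound, i.e., its length $n$ satisfies $n>\sum_{i=0}^{k(\mathcal{S}_k^\alpha)-1}\left\lceil\frac{d_H(\mathcal{S}_k^\alpha)}{q^i}\right\rceil$.
   Context: Let $R$ be a finite commutative chain ring with maximal ideal $\langle\gamma\rangle$, nilpotency index $s$ and residue field $R/\langle\gamma\rangle\cong\mathbb{F}_q$. Fix coset representatives $T=\{e_0,\dots,e_{q-1}\}$ with $e_0=0,e_1=1$, ordered $e_0<\dots<e_{q-1}$; each $r\in R$ is uniquely $\sum_{i=0}^{s-1}r_i\gamma^i$, $r_i\in T$; order $R$ by $x>y$ iff $x_i>y_i$ in $T$ for the largest $i$ with $x_i\neq y_i$; list $R=\{\rho_0,\dots,\rho_{q^s-1}\}$ increasingly. $\mathbf{a}^{(m)}$ is the constant vector of length $m$. Define $G_1^\alpha=(\rho_0\ \cdots\ \rho_{q^s-1})$ and, for $k>1$, $G_k^\alpha$ as the $k\times q^{sk}$ matrix of $q^s$ column blocks, the $j$-th having first row $\boldsymbol{\rho_j}^{(q^{s(k-1)})}$ and $G_{k-1}^\alpha$ below. $\mathcal{S}_k^\alpha$ is the $R$-submodule of $R^{q^{sk}}$ generated by the rows of $G_k^\alpha$. For a linear code $\mathcal{C}\subseteq R^n$, $d_H(\mathcal{C})$ is its minimum Hamming distance and $k(\mathcal{C})$ is the minimum rank of a free $R$-submodule $\mathcal{C}'\subseteq R^n$ with $\mathcal{C}\subseteq\mathcal{C}'$.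 The Griesmer bound states $n\ge\sum_{i=0}^{k(\mathcal{C})-1}\lceil d_H(\mathcal{C})/q^i\rceil$; a code is optimal with respect to it when equality holds. *)

theory Defs
  imports Main "HOL-Library.Multiset" Complex_Main
begin

definition is_ideal :: "'a::comm_ring_1 set \<Rightarrow> bool" where
  "is_ideal I \<longleftrightarrow> 0 \<in> I \<and> (\<forall>x\<in>I. \<forall>y\<in>I. x + y \<in> I) \<and> (\<forall>x\<in>I. \<forall>r. r * x \<in> I)"

definition chain_ring :: "'a::comm_ring_1 itself \<Rightarrow> bool" where
  "chain_ring _ \<longleftrightarrow> (\<forall>I J :: 'a set. is_ideal I \<longrightarrow> is_ideal J \<longrightarrow> I \<subseteq> J \<or> J \<subseteq> I)"

definition is_maximal_ideal :: "'a::comm_ring_1 set \<Rightarrow> bool" where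
  "is_maximal_ideal M \<longleftrightarrow> is_ideal M \<and> M \<noteq> UNIV \<and>
     (\<forall>J. is_ideal J \<longrightarrow> M \<subseteq> J \<longrightarrow> J = M \<or> J = UNIV)"

definition principal_ideal :: "'a::comm_ring_1 \<Rightarrow> 'a set" where
  "principal_ideal g = range (\<lambda>r. g * r)"

text \<open>Standing data: \<open>\<gamma>\<close> generates the maximal ideal, \<open>s\<close> is the nilpotency index of \<open>\<gamma>\<close>,
  the list \<open>e = [e_0,...,e_{q-1}]\<close> is an (ordered) set of coset representatives of
  \<open>R/\<langle>\<gamma>\<rangle>\<close> with \<open>e_0 = 0\<close>, \<open>e_1 = 1\<close>; its order is the list order.\<close>
definition chain_ring_data :: "'a::comm_ring_1 \<Rightarrow> nat \<Rightarrow> 'a list \<Rightarrow> bool" where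
  "chain_ring_data \<gamma> s e \<longleftrightarrow>
     is_maximal_ideal (principal_ideal \<gamma>) \<and>
     s \<ge> 1 \<and> \<gamma> ^ s = 0 \<and> \<gamma> ^ (s - 1) \<noteq> 0 \<and>
     distinct e \<and> length e \<ge> 2 \<and> e ! 0 = 0 \<and> e ! 1 = 1 \<and>
     (\<forall>r. \<exists>!t. t \<in> set e \<and> r - t \<in> principal_ideal \<gamma>)"

definition T_less :: "'a list \<Rightarrow> 'a \<Rightarrow> 'a \<Rightarrow> bool" where
  "T_less e a b \<longleftrightarrow> (\<exists>i j. i < j \<and> j < length e \<and> e ! i = a \<and> e ! j = b)"

definition digit :: "'a::comm_ring_1 \<Rightarrow> nat \<Rightarrow> 'a list \<Rightarrow> 'a \<Rightarrow> nat \<Rightarrow> 'a" where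
  "digit \<gamma> s e r = (THE d. (\<forall>i<s. d i \<in> set e) \<and> (\<forall>i\<ge>s. d i = 0) \<and>
                            r = (\<Sum>i<s. d i * \<gamma> ^ i))"

definition R_less :: "'a::comm_ring_1 \<Rightarrow> nat \<Rightarrow> 'a list \<Rightarrow> 'a \<Rightarrow> 'a \<Rightarrow> bool" where
  "R_less \<gamma> s e x y \<longleftrightarrow> (\<exists>i<s. digit \<gamma> s e x i \<noteq> digit \<gamma> s e y i \<and>
       (\<forall>j. i < j \<and> j < s \<longrightarrow> digit \<gamma> s e x j = digit \<gamma> s e y j) \<and>
       T_less e (digit \<gamma> s e x i) (digit \<gamma> s e y i))"

text \<open>\<open>\<rho>_j\<close>: the \<open>j\<close>-th element of \<open>R\<close> in increasing order (indices from 0).\<close>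
definition rho :: "'a::comm_ring_1 \<Rightarrow> nat \<Rightarrow> 'a list \<Rightarrow> nat \<Rightarrow> 'a" where
  "rho \<gamma> s e j = (THE r. card {x. R_less \<gamma> s e x r} = j)"

text \<open>\<open>G_k^\<alpha>\<close> as a function (row, column) for \<open>k \<ge> 1\<close>; rows \<open>< k\<close>, columns \<open>< q^{sk}\<close>
  where \<open>q = length e\<close>.\<close>
fun G_alpha :: "'a::comm_ring_1 \<Rightarrow> nat \<Rightarrow> 'a list \<Rightarrow> nat \<Rightarrow> nat \<Rightarrow> nat \<Rightarrow> 'a" where
  "G_alpha \<gamma> s e 0 i c = 0"
| "G_alpha \<gamma> s e (Suc 0) i c = (if i = 0 then rho \<gamma> s e c else 0)"
| "G_alpha \<gamma> s e (Suc (Suc k)) i c =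
     (let N = (length e ^ s) ^ Suc k in
      if i = 0 then rho \<gamma> s e (c div N) else G_alpha \<gamma> s e (Suc k) (i - 1) (c mod N))"

text \<open>Vectors of \<open>R^n\<close> are represented as functions \<open>nat \<Rightarrow> 'a\<close> vanishing from \<open>n\<close> on.\<close>
definition vecs :: "nat \<Rightarrow> (nat \<Rightarrow> 'a::zero) set" where
  "vecs n = {v. \<forall>c\<ge>n. v c = 0}"

definition rspan :: "nat \<Rightarrow> nat \<Rightarrow> (nat \<Rightarrow> nat \<Rightarrow> 'a::comm_ring_1) \<Rightarrow> (nat \<Rightarrow> 'a) set" where
  "rspan n m b = {v. \<exists>a. v = (\<lambda>c. if c < n then (\<Sum>j<m. a j * b j c) else 0)}"

definition lin_indep :: "nat \<Rightarrow> nat \<Rightarrow> (nat \<Rightarrow> nat \<Rightarrow> 'a::comm_ring_1) \<Rightarrow> bool" where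
  "lin_indep n m b \<longleftrightarrow> (\<forall>a. (\<forall>c<n. (\<Sum>j<m. a j * b j c) = 0) \<longrightarrow> (\<forall>j<m. a j = 0))"

definition free_submodule :: "nat \<Rightarrow> (nat \<Rightarrow> 'a::comm_ring_1) set \<Rightarrow> nat \<Rightarrow> bool" where
  "free_submodule n C' m \<longleftrightarrow> (\<exists>b. (\<forall>j<m. b j \<in> vecs n) \<and> lin_indep n m b \<and> C' = rspan n m b)"

definition code_rank :: "nat \<Rightarrow> (nat \<Rightarrow> 'a::comm_ring_1) set \<Rightarrow> nat" where
  "code_rank n C = (LEAST m. \<exists>C'. free_submodule n C' m \<and> C \<subseteq> C')"

definition hweight :: "nat \<Rightarrow> (nat \<Rightarrow> 'a::zero) \<Rightarrow> nat" where
  "hweight n v = card {c. c < n \<and> v c \<noteq> 0}"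

definition min_hdist :: "nat \<Rightarrow> (nat \<Rightarrow> 'a::comm_ring_1) set \<Rightarrow> nat" where
  "min_hdist n C = Min {hweight n v | v. v \<in> C \<and> v \<noteq> (\<lambda>_. 0)}"

definition simplex_alpha :: "'a::comm_ring_1 \<Rightarrow> nat \<Rightarrow> 'a list \<Rightarrow> nat \<Rightarrow> (nat \<Rightarrow> 'a) set" where
  "simplex_alpha \<gamma> s e k = rspan ((length e ^ s) ^ k) k (\<lambda>i c. G_alpha \<gamma> s e k i c)"

end

theory Submission
  imports Defs
begin

locale cr =
  fixes g :: "'a::{comm_ring_1,finite}" and s :: nat and e :: "'a list"
  assumes data: "chain_ring_data g s e"
begin

lemma s1: "s \<ge> 1" and gs: "g^s = 0" and gs1: "g^(s-1) \<noteq> 0" and de: "distinct e"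
  and q2: "length e \<ge> 2" and e0: "e!0 = 0" and e1: "e!1 = 1"
  and reps: "\<And>r. \<exists>!t. t \<in> set e \<and> r - t \<in> principal_ideal g"
  and maxi: "is_maximal_ideal (principal_ideal g)"
  using data unfolding chain_ring_data_def by auto

lemma P_iff: "x \<in> principal_ideal g \<longleftrightarrow> (\<exists>y. x = g*y)" unfolding principal_ideal_def by auto

lemma rep_unique: assumes "a \<in> set e" "b \<in> set e" "a - b \<in> principal_ideal g" shows "a = b"
proof -
  have "a - a \<in> principal_ideal g" unfolding P_iff by (rule exI[of _ 0]) simp
  with assms reps[of a] show ?thesis by blast
qed

lemma one_in: assumes u: "u \<notin> principal_ideal g" shows "\<exists>a b. 1 = g*a + u*b"
proof -
  define J where "J = {g*a + u*b | a b. True}"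
  have "is_ideal J" unfolding is_ideal_def J_def
  proof (intro conjI ballI allI)
    show "0 \<in> {g*a + u*b | a b. True}" by (rule CollectI, rule exI[of _ 0], rule exI[of _ 0]) simp
  next
    fix x y assume "x \<in> {g*a + u*b | a b. True}" "y \<in> {g*a + u*b | a b. True}"
    then obtain a b a' b' where "x = g*a+u*b" "y = g*a'+u*b'" by blast
    then have "x + y = g*(a+a') + u*(b+b')" by (simp add: algebra_simps)
    then show "x + y \<in> {g*a + u*b | a b. True}" by blast
  next
    fix x r assume "x \<in> {g*a + u*b | a b. True}"
    then obtain a b where "x = g*a+u*b" by blast
    then have "r * x = g*(r*a) + u*(r*b)" by (simp add: algebra_simps)
    then show "r * x \<in> {g*a + u*b | a b. True}" by blast
  qed
  moreover have "principal_ideal g \<subseteq> J"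
  proof
    fix x assume "x \<in> principal_ideal g"
    then obtain y where "x = g*y" unfolding P_iff by blast
    then have "x = g*y + u*0" by simp
    then show "x \<in> J" unfolding J_def by blast
  qed
  moreover have "u \<in> J" unfolding J_def by (rule CollectI, rule exI[of _ 0], rule exI[of _ 1]) simp
  ultimately have "J = UNIV" using maxi u unfolding is_maximal_ideal_def by blast
  then have "1 \<in> J" by simp
  then show ?thesis unfolding J_def by blast
qed

lemma A: assumes i: "i < s" and u: "u \<notin> principal_ideal g" shows "g^i * u \<noteq> 0"
proof
  assume z: "g^i * u = 0"
  obtain a b where ab: "1 = g*a + u*b" using one_in[OF u] by blast
  have "g^i = g^(i+m) * a^m" for m
  proof (induction m)
    case 0 then show ?case by simp
  next
    case (Suc m)
    have "g^(i+m) * u = g^m * (g^i * u)" by (simp add: power_add algebra_simps)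
    then have z2: "g^(i+m) * u = 0" using z by simp
    have "g^(i+m) * a^m = g^(i+m) * a^m * (g*a + u*b)" using ab by simp
    also have "\<dots> = g^(i + Suc m) * a^(Suc m) + (g^(i+m) * u) * (a^m * b)"
      by (simp add: algebra_simps)
    finally show ?case using Suc z2 by simp
  qed
  from this[of s] have "g^i = 0" using gs by (simp add: power_add)
  have "g^(s-1) = g^i * g^(s-1-i)" using i by (simp flip: power_add)
  then show False using gs1 \<open>g^i = 0\<close> by simp
qed


lemma exist: "\<exists>d. (\<forall>i<m. d i \<in> set e) \<and> (\<forall>i\<ge>m. d i = 0) \<and> (\<exists>y. r = (\<Sum>i<m. d i * g^i) + g^m * y)"
proof (induction m)
  case 0
  show ?case by (rule exI[of _ "\<lambda>_. 0"]) auto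
next
  case (Suc m)
  then obtain d y where d: "\<forall>i<m. d i \<in> set e" "\<forall>i\<ge>m. d i = 0" "r = (\<Sum>i<m. d i * g^i) + g^m * y"
    by blast
  obtain t where t: "t \<in> set e" "y - t \<in> principal_ideal g" using reps[of y] by blast
  then obtain y' where y': "y - t = g * y'" unfolding P_iff by blast
  define d' where "d' = d(m := t)"
  have "(\<Sum>i<Suc m. d' i * g^i) = (\<Sum>i<m. d i * g^i) + t * g^m"
  proof -
    have "(\<Sum>i<m. d' i * g^i) = (\<Sum>i<m. d i * g^i)" unfolding d'_def by (intro sum.cong) auto
    then show ?thesis unfolding d'_def by simp
  qed
  moreover have "r = (\<Sum>i<m. d i * g^i) + t * g^m + g^Suc m * y'"
  proof -
    have "y = t + g*y'" using y' by (metis diff_add_cancel add.commute)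
    then show ?thesis using d(3) by (simp add: algebra_simps)
  qed
  ultimately have "r = (\<Sum>i<Suc m. d' i * g^i) + g^Suc m * y'" by simp
  moreover have "\<forall>i<Suc m. d' i \<in> set e" using d(1) t(1) unfolding d'_def by (simp add: less_Suc_eq)
  moreover have "\<forall>i\<ge>Suc m. d' i = 0" using d(2) unfolding d'_def by simp
  ultimately show ?case by blast
qed

lemma uniq: "m \<le> s \<Longrightarrow> (\<forall>i<m. d i \<in> set e \<and> d' i \<in> set e) \<Longrightarrow>
   (\<Sum>i<m. d i * g^i) = (\<Sum>i<m. d' i * g^i) + g^m * y \<Longrightarrow> \<forall>i<m. d i = d' i"
proof (induction m arbitrary: y)
  case 0 then show ?case by simp
next
  case (Suc m)
  have h: "(\<Sum>i<m. d i * g^i) = (\<Sum>i<m. d' i * g^i) + g^m * (d' m - d m + g * y)"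
    using Suc.prems(3) by (simp add: algebra_simps)
  have lo: "\<forall>i<m. d i = d' i" using Suc.IH[OF _ _ h] Suc.prems by simp
  then have "(\<Sum>i<m. d i * g^i) = (\<Sum>i<m. d' i * g^i)" by simp
  with h have "g^m * (d' m - d m + g * y) = 0" by simp
  moreover have "m < s" using Suc.prems(1) by simp
  ultimately have "d' m - d m + g * y \<in> principal_ideal g" using A by blast
  then obtain z where "d' m - d m + g * y = g * z" unfolding P_iff by blast
  then have "d' m - d m = g * (z - y)" by (simp add: algebra_simps)
  then have "d' m - d m \<in> principal_ideal g" unfolding P_iff by blast
  then have "d' m = d m" using rep_unique Suc.prems(2) by blast
  then show ?case using lo by (simp add: less_Suc_eq)
qed

definition spec :: "'a \<Rightarrow> (nat \<Rightarrow> 'a) \<Rightarrow> bool" where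
  "spec r d \<longleftrightarrow> (\<forall>i<s. d i \<in> set e) \<and> (\<forall>i\<ge>s. d i = 0) \<and> r = (\<Sum>i<s. d i * g^i)"

lemma ex1_spec: "\<exists>!d. spec r d"
proof -
  obtain d y where d: "\<forall>i<s. d i \<in> set e" "\<forall>i\<ge>s. d i = 0" "r = (\<Sum>i<s. d i * g^i) + g^s * y"
    using exist[of s r] by blast
  have "r = (\<Sum>i<s. d i * g^i)" using d(3) gs by simp
  then have "spec r d" unfolding spec_def using d(1,2) by blast
  moreover have "d1 = d2" if "spec r d1" "spec r d2" for d1 d2
  proof
    fix i
    have a: "\<forall>i<s. d1 i \<in> set e \<and> d2 i \<in> set e" using that unfolding spec_def by blast
    have b: "(\<Sum>i<s. d1 i * g^i) = (\<Sum>i<s. d2 i * g^i) + g^s * 0"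
      using that unfolding spec_def by (metis add_0_right mult_zero_right)
    have c: "\<forall>i<s. d1 i = d2 i" using uniq[OF order_refl a b] .
    show "d1 i = d2 i"
    proof (cases "i < s")
      case True then show ?thesis using c by blast
    next
      case False then show ?thesis using that unfolding spec_def by simp
    qed
  qed
  ultimately show ?thesis by blast
qed

lemma digit_spec: "spec r (digit g s e r)"
proof -
  have "digit g s e r = (THE d. spec r d)" unfolding digit_def spec_def by simp
  then show ?thesis using theI'[OF ex1_spec[of r]] by simp
qed

lemma digit_eq: assumes "spec r d" shows "digit g s e r = d"
proof -
  have u: "\<forall>d1 d2. spec r d1 \<longrightarrow> spec r d2 \<longrightarrow> d1 = d2" using ex1_spec[of r] by blast
  then show ?thesis using digit_spec[of r] assms by blast
qed

lemma digit_in: "i < s \<Longrightarrow> digit g s e r i \<in> set e"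
  using digit_spec unfolding spec_def by blast

lemma digit_sum: "r = (\<Sum>i<s. digit g s e r i * g^i)"
  using digit_spec unfolding spec_def by blast

lemma digit_inj: assumes "\<forall>i<s. digit g s e x i = digit g s e y i" shows "x = y"
proof -
  have "x = (\<Sum>i<s. digit g s e x i * g^i)" by (rule digit_sum)
  also have "\<dots> = (\<Sum>i<s. digit g s e y i * g^i)" using assms by (intro sum.cong) auto
  also have "\<dots> = y" by (rule digit_sum[symmetric])
  finally show ?thesis .
qed

definition idx :: "'a \<Rightarrow> nat" where "idx t = (LEAST i. i < length e \<and> e!i = t)"

lemma idx_nth: "i < length e \<Longrightarrow> idx (e!i) = i"
  unfolding idx_def
  by (rule Least_equality) (use de nth_eq_iff_index_eq in \<open>auto\<close>)

lemma idx_in: assumes "t \<in> set e" shows "idx t < length e \<and> e ! idx t = t"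
proof -
  obtain i where i: "i < length e" "e!i = t" using assms by (auto simp: in_set_conv_nth)
  then have "idx t = i" using idx_nth[OF i(1)] by simp
  then show ?thesis using i by simp
qed

definition num :: "'a \<Rightarrow> nat" where
  "num r = (\<Sum>i<s. idx (digit g s e r i) * length e ^ i)"

end


lemma low_sum: "(\<forall>j<i. u j < (q::nat)) \<Longrightarrow> (\<Sum>j<i. u j * q^j) < q^i"
proof (induction i)
  case 0 then show ?case by simp
next
  case (Suc i)
  have "(\<Sum>j<Suc i. u j * q^j) = (\<Sum>j<i. u j * q^j) + u i * q^i" by simp
  also have "\<dots> < q^i + u i * q^i" using Suc by simp
  also have "\<dots> = (u i + 1) * q^i" by simp
  also have "\<dots> \<le> q * q^i" using Suc.prems by (intro mult_le_mono1) (auto simp: Suc_le_eq)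
  finally show ?case by simp
qed

lemma lex: assumes "\<forall>j<s. u j < (q::nat)" "i < s" "u i < v i" "\<forall>j. i<j \<and> j<s \<longrightarrow> u j = v j"
  shows "(\<Sum>j<s. u j*q^j) < (\<Sum>j<s. v j * q^j)"
proof -
  have sp: "{..<s} = {..<Suc i} \<union> {Suc i..<s}" using assms(2) by auto
  have "(\<Sum>j<Suc i. u j*q^j) < (\<Sum>j<Suc i. v j*q^j)"
  proof -
    have "(\<Sum>j<Suc i. u j*q^j) = (\<Sum>j<i. u j * q^j) + u i * q^i" by simp
    also have "\<dots> < q^i + u i * q^i" using low_sum[of i u q] assms(1,2) by simp
    also have "\<dots> = (u i + 1) * q^i" by simp
    also have "\<dots> \<le> v i * q^i" using assms(3) by (intro mult_le_mono1) simp
    also have "\<dots> \<le> (\<Sum>j<Suc i. v j*q^j)" by simp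
    finally show ?thesis .
  qed
  moreover have "(\<Sum>j\<in>{Suc i..<s}. u j*q^j) = (\<Sum>j\<in>{Suc i..<s}. v j*q^j)"
    using assms(4) by (intro sum.cong) auto
  moreover have "(\<Sum>j<s. u j*q^j) = (\<Sum>j<Suc i. u j*q^j) + (\<Sum>j\<in>{Suc i..<s}. u j*q^j)"
    unfolding sp by (rule sum.union_disjoint) auto
  moreover have "(\<Sum>j<s. v j*q^j) = (\<Sum>j<Suc i. v j*q^j) + (\<Sum>j\<in>{Suc i..<s}. v j*q^j)"
    unfolding sp by (rule sum.union_disjoint) auto
  ultimately show ?thesis by linarith
qed

lemma base_sum: "(\<Sum>i<n. (m div q^i mod q) * q^i) = m mod (q::nat)^n"
proof (induction n)
  case 0 then show ?case by simp
next
  case (Suc n)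
  have "m mod (q^n * q) = q^n * (m div q^n mod q) + m mod q^n" by (rule mod_mult2_eq)
  have "(\<Sum>i<Suc n. (m div q^i mod q) * q^i) = m mod q^n + (m div q^n mod q) * q^n" using Suc.IH by simp
  also have "\<dots> = m mod (q^n * q)" unfolding mod_mult2_eq by (simp add: ac_simps)
  finally show ?case by (simp add: mult.commute)
qed

context cr begin

lemma q_pos: "length e > 0" using q2 by linarith

lemma idx_digit: "i < s \<Longrightarrow> idx (digit g s e r i) < length e"
  using idx_in digit_in by blast

lemma num_lt: "num r < length e ^ s"
  unfolding num_def using low_sum[of s "\<lambda>i. idx (digit g s e r i)" "length e"] idx_digit by blast

lemma Rless_num: assumes "R_less g s e x y" shows "num x < num y"
proof -
  obtain i where i: "i<s" "\<forall>j. i<j \<and> j<s \<longrightarrow> digit g s e x j = digit g s e y j"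
    "T_less e (digit g s e x i) (digit g s e y i)" using assms unfolding R_less_def by blast
  obtain a b where ab: "a < b" "b < length e" "e!a = digit g s e x i" "e!b = digit g s e y i"
    using i(3) unfolding T_less_def by blast
  have "idx (digit g s e x i) = a" "idx (digit g s e y i) = b"
    using idx_nth[of a] idx_nth[of b] ab by auto
  then have lt: "idx (digit g s e x i) < idx (digit g s e y i)" using ab by simp
  show ?thesis unfolding num_def
    by (rule lex[of s "\<lambda>j. idx (digit g s e x j)" "length e" i "\<lambda>j. idx (digit g s e y j)"])
       (use i lt idx_digit in auto)
qed

lemma total: assumes "x \<noteq> y" shows "R_less g s e x y \<or> R_less g s e y x"
proof -
  define D where "D = {i. i < s \<and> digit g s e x i \<noteq> digit g s e y i}"
  have "D \<noteq> {}" using digit_inj assms unfolding D_def by blast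
  have fD: "finite D" unfolding D_def by simp
  define i where "i = Max D"
  have iD: "i \<in> D" using Max_in fD \<open>D\<noteq>{}\<close> i_def by blast
  have above: "\<forall>j. i<j \<and> j<s \<longrightarrow> digit g s e x j = digit g s e y j"
  proof (intro allI impI)
    fix j assume j: "i<j \<and> j<s"
    show "digit g s e x j = digit g s e y j"
    proof (rule ccontr)
      assume "digit g s e x j \<noteq> digit g s e y j"
      then have "j \<in> D" using j unfolding D_def by blast
      then have "j \<le> i" using Max_ge fD i_def by blast
      then show False using j by simp
    qed
  qed
  have iis: "i < s" "digit g s e x i \<noteq> digit g s e y i" using iD unfolding D_def by auto
  have ix: "idx (digit g s e x i) < length e" "e ! idx (digit g s e x i) = digit g s e x i"
    using idx_in digit_in iis(1) by blast+
  have iy: "idx (digit g s e y i) < length e" "e ! idx (digit g s e y i) = digit g s e y i"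
    using idx_in digit_in iis(1) by blast+
  have ne: "idx (digit g s e x i) \<noteq> idx (digit g s e y i)"
    using ix(2) iy(2) iis(2) by metis
  then consider "idx (digit g s e x i) < idx (digit g s e y i)" | "idx (digit g s e y i) < idx (digit g s e x i)"
    by linarith
  then show ?thesis
  proof cases
    case 1
    then have "T_less e (digit g s e x i) (digit g s e y i)"
      unfolding T_less_def using ix iy by metis
    then have "R_less g s e x y" unfolding R_less_def using iis above by blast
    then show ?thesis by blast
  next
    case 2
    then have "T_less e (digit g s e y i) (digit g s e x i)"
      unfolding T_less_def using ix iy by metis
    moreover have "\<forall>j. i<j \<and> j<s \<longrightarrow> digit g s e y j = digit g s e x j" using above by simp
    ultimately have "R_less g s e y x" unfolding R_less_def using iis by metis
    then show ?thesis by blast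
  qed
qed

lemma num_inj: assumes "num x = num y" shows "x = y"
proof (rule ccontr)
  assume "x \<noteq> y"
  then have "R_less g s e x y \<or> R_less g s e y x" by (rule total)
  then have "num x < num y \<or> num y < num x" using Rless_num by blast
  then show False using assms by simp
qed

lemma Rless_iff: "R_less g s e x y \<longleftrightarrow> num x < num y"
proof
  assume "num x < num y"
  then have "x \<noteq> y" by auto
  then have "R_less g s e x y \<or> R_less g s e y x" by (rule total)
  then show "R_less g s e x y" using Rless_num \<open>num x < num y\<close> by force
qed (rule Rless_num)

lemma num_surj: assumes "m < length e ^ s" shows "\<exists>r. num r = m"
proof -
  define d where "d i = (if i<s then e!(m div length e^i mod length e) else 0)" for i
  define r where "r = (\<Sum>i<s. d i * g^i)"
  have "spec r d" unfolding spec_def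
  proof (intro conjI allI impI)
    fix i assume "i < s"
    then show "d i \<in> set e" unfolding d_def using q_pos by simp
  next
    fix i assume "s \<le> i" then show "d i = 0" unfolding d_def by simp
  qed (simp add: r_def)
  then have dr: "digit g s e r = d" by (rule digit_eq)
  have "num r = (\<Sum>i<s. (m div length e^i mod length e) * length e^i)"
    unfolding num_def dr by (intro sum.cong) (simp_all add: d_def idx_nth[OF mod_less_divisor[OF q_pos]])
  also have "\<dots> = m mod length e ^ s" by (rule base_sum)
  also have "\<dots> = m" using assms by simp
  finally show ?thesis by blast
qed

lemma card_less: "card {x. R_less g s e x r} = num r"
proof -
  have 1: "{x. R_less g s e x r} = {x. num x < num r}" using Rless_iff by blast
  have 2: "num ` {x. num x < num r} = {..<num r}"
  proof
    show "num ` {x. num x < num r} \<subseteq> {..<num r}" by auto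
    show "{..<num r} \<subseteq> num ` {x. num x < num r}"
    proof
      fix j assume "j \<in> {..<num r}"
      then have "j < length e ^ s" using num_lt[of r] by simp
      then obtain x where "num x = j" using num_surj by blast
      then show "j \<in> num ` {x. num x < num r}" using \<open>j \<in> {..<num r}\<close> by force
    qed
  qed
  have 3: "inj_on num {x. num x < num r}" using num_inj by (auto intro: inj_onI)
  have "card {x. num x < num r} = card {..<num r}" using card_image[OF 3] 2 by simp
  then show ?thesis using 1 by simp
qed

lemma rho_num: "rho g s e (num r) = r"
  unfolding rho_def card_less
  by (rule the_equality) (simp_all add: num_inj)

lemma num_mod: "num r mod length e = idx (digit g s e r 0)"
proof -
  obtain s' where s': "s = Suc s'" using s1 by (cases s) auto
  have ls: "{..<s} = {..<Suc s'}" using s' by simp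
  have "num r = (\<Sum>i<Suc s'. idx (digit g s e r i) * length e ^ i)" unfolding num_def ls ..
  also have "\<dots> = idx (digit g s e r 0) + length e * (\<Sum>i<s'. idx (digit g s e r (Suc i)) * length e ^ i)"
    unfolding sum.lessThan_Suc_shift by (simp add: sum_distrib_left ac_simps)
  finally have "num r mod length e = idx (digit g s e r 0) mod length e" by simp
  then show ?thesis using idx_digit[of 0 r] s' by simp
qed

lemma gamma_digit: "g^(s-1) * r = 0 \<longleftrightarrow> digit g s e r 0 = 0"
proof -
  obtain s' where s': "s = Suc s'" using s1 by (cases s) auto
  have ls: "{..<s} = {..<Suc s'}" using s' by simp
  have "r = (\<Sum>i<s. digit g s e r i * g^i)" by (rule digit_sum)
  also have "\<dots> = digit g s e r 0 + g * (\<Sum>i<s'. digit g s e r (Suc i) * g^i)"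
    unfolding ls sum.lessThan_Suc_shift by (simp add: sum_distrib_left ac_simps)
  finally have r: "r = digit g s e r 0 + g * (\<Sum>i<s'. digit g s e r (Suc i) * g^i)" .
  have gg: "g^(s-1) * g = 0" using gs s' by (simp add: mult.commute)
  have "g^(s-1) * r = g^(s-1) * digit g s e r 0 + (g^(s-1) * g) * (\<Sum>i<s'. digit g s e r (Suc i) * g^i)"
    by (subst r) (simp add: algebra_simps)
  then have eq: "g^(s-1) * r = g^(s-1) * digit g s e r 0" using gg by simp
  have d0: "digit g s e r 0 \<in> set e" using digit_in s' by simp
  have z: "0 \<in> set e" using e0 q_pos by (metis nth_mem)
  show ?thesis
  proof
    assume "g^(s-1) * r = 0"
    then have h: "g^(s-1) * digit g s e r 0 = 0" using eq by simp
    show "digit g s e r 0 = 0"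
    proof (rule ccontr)
      assume "digit g s e r 0 \<noteq> 0"
      then have "digit g s e r 0 - 0 \<notin> principal_ideal g" using rep_unique[OF d0 z] by blast
      then have "g^(s-1) * digit g s e r 0 \<noteq> 0" using A[of "s-1"] s' by simp
      then show False using h by simp
    qed
  next
    assume "digit g s e r 0 = 0"
    then show "g^(s-1) * r = 0" using eq by simp
  qed
qed

lemma key: assumes "j < length e ^ s" shows "g^(s-1) * rho g s e j = 0 \<longleftrightarrow> j mod length e = 0"
proof -
  obtain r where r: "num r = j" using num_surj assms by blast
  then have rj: "rho g s e j = r" using rho_num by blast
  have d0: "digit g s e r 0 \<in> set e" using digit_in s1 by simp
  have "digit g s e r 0 = 0 \<longleftrightarrow> idx (digit g s e r 0) = 0"
  proof
    assume "digit g s e r 0 = 0"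
    then show "idx (digit g s e r 0) = 0" using idx_nth[of 0] e0 q_pos by simp
  next
    assume "idx (digit g s e r 0) = 0"
    then show "digit g s e r 0 = 0" using idx_in[OF d0] e0 by metis
  qed
  then have dd: "digit g s e r 0 = 0 \<longleftrightarrow> idx (digit g s e r 0) = 0" .
  have jm: "j mod length e = idx (digit g s e r 0)" using num_mod[of r] r by simp
  show ?thesis unfolding rj jm gamma_digit using dd .
qed

lemma rho01: "\<exists>z w. z < length e ^ s \<and> w < length e ^ s \<and> rho g s e z = 0 \<and> rho g s e w = 1"
  using rho_num num_lt by blast

end


lemma G_col: "\<forall>i<Suc k. f i < length e ^ s \<Longrightarrow>
  \<exists>c<(length e ^ s)^Suc k. \<forall>i<Suc k. G_alpha g s e (Suc k) i c = rho g s e (f i)"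
proof (induction k arbitrary: f)
  case 0
  then show ?case by (intro exI[of _ "f 0"]) auto
next
  case (Suc k)
  define Q where "Q = length e ^ s"
  have "f 0 < Q" using Suc.prems Q_def by blast
  then have Qp: "Q > 0" by simp
  obtain c' where c': "c' < Q^Suc k" "\<forall>i<Suc k. G_alpha g s e (Suc k) i c' = rho g s e (f (Suc i))"
    using Suc.IH[of "\<lambda>i. f (Suc i)"] Suc.prems Q_def by auto
  define N where "N = Q^Suc k"
  have Np: "N > 0" using Qp N_def by simp
  define c where "c = f 0 * N + c'"
  have cd: "c div N = f 0" using c' Np unfolding c_def N_def by simp
  have cm: "c mod N = c'" using c' Np unfolding c_def N_def by simp
  have "c < (f 0 + 1) * N" using c' unfolding c_def N_def by simp
  also have "\<dots> \<le> Q * N" using Suc.prems Q_def by (intro mult_le_mono1) (simp add: Suc_le_eq)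
  finally have cb: "c < Q^Suc (Suc k)" unfolding N_def by simp
  have "\<forall>i<Suc (Suc k). G_alpha g s e (Suc (Suc k)) i c = rho g s e (f i)"
  proof (intro allI impI)
    fix i assume i: "i < Suc (Suc k)"
    show "G_alpha g s e (Suc (Suc k)) i c = rho g s e (f i)"
    proof (cases i)
      case 0 then show ?thesis using cd by (simp add: Let_def N_def Q_def)
    next
      case (Suc i')
      then have "G_alpha g s e (Suc (Suc k)) i c = G_alpha g s e (Suc k) i' c'"
        using cm by (simp add: Let_def N_def Q_def)
      also have "\<dots> = rho g s e (f i)" using c'(2) Suc i by simp
      finally show ?thesis .
    qed
  qed
  then show ?case using cb Q_def by blast
qed

lemma G_last: "0 < length e ^ s \<Longrightarrow> c < (length e ^ s)^Suc k \<Longrightarrow>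
   G_alpha g s e (Suc k) k c = rho g s e (c mod (length e ^ s))"
proof (induction k arbitrary: c)
  case 0 then show ?case by simp
next
  case (Suc k)
  define Q where "Q = length e ^ s"
  have "G_alpha g s e (Suc (Suc k)) (Suc k) c = G_alpha g s e (Suc k) k (c mod Q^Suc k)"
    by (simp add: Let_def Q_def)
  also have "\<dots> = rho g s e (c mod Q^Suc k mod Q)"
    using Suc.IH[of "c mod Q^Suc k"] Suc.prems Q_def by simp
  also have "c mod Q^Suc k mod Q = c mod Q" by (rule mod_mod_cancel) simp
  finally show ?case using Q_def by simp
qed

lemma card_nondvd: "0 < (q::nat) \<Longrightarrow> card {c. c < q*M \<and> \<not> q dvd c} = q*M - M"
proof -
  assume q: "0 < q"
  have 1: "{c. c < q*M \<and> q dvd c} = (\<lambda>j. q*j) ` {..<M}"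
  proof
    show "{c. c < q*M \<and> q dvd c} \<subseteq> (\<lambda>j. q*j) ` {..<M}"
    proof
      fix c assume "c \<in> {c. c < q*M \<and> q dvd c}"
      then obtain j where "c = q*j" "q*j < q*M" by auto
      then show "c \<in> (\<lambda>j. q*j) ` {..<M}" by auto
    qed
  qed (use q in auto)
  have 2: "card {c. c < q*M \<and> q dvd c} = M"
    unfolding 1 by (subst card_image) (use q in \<open>auto intro: inj_onI\<close>)
  have 3: "{c. c < q*M \<and> \<not> q dvd c} = {..<q*M} - {c. c < q*M \<and> q dvd c}" by auto
  show ?thesis unfolding 3 by (subst card_Diff_subset) (auto simp: 2)
qed

lemma hweight_le: "hweight n v \<le> n"
  unfolding hweight_def using card_mono[of "{..<n}" "{c. c < n \<and> v c \<noteq> 0}"] by auto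


theorem proposition3p28:
  fixes \<gamma> :: "'a::{comm_ring_1, finite}" and s k :: nat and e :: "'a list"
  assumes "chain_ring TYPE('a)"
    and "chain_ring_data \<gamma> s e"
    and "k \<ge> 1"
  defines "q \<equiv> length e"
  defines "n \<equiv> (q ^ s) ^ k"
  shows "real n > (\<Sum>i<code_rank n (simplex_alpha \<gamma> s e k).
            real_of_int \<lceil>real (min_hdist n (simplex_alpha \<gamma> s e k)) / real q ^ i\<rceil>)"
proof -
  interpret cr \<gamma> s e by unfold_locales (rule assms(2))
  obtain k' where k': "k = Suc k'" using assms(3) by (cases k) auto
  define Q where "Q = q^s"
  have q2': "q \<ge> 2" using q2 q_def by simp
  have Qq: "Q \<ge> q" unfolding Q_def using power_increasing[of 1 s q] s1 q2' by simp
  have Qp: "Q > 0" using Qq q2' by simp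
  have nQ: "n = Q^k" unfolding n_def Q_def ..
  define G where "G = (\<lambda>i c. G_alpha \<gamma> s e k i c)"
  define S where "S = simplex_alpha \<gamma> s e k"
  have S_eq: "S = rspan n k G" unfolding S_def simplex_alpha_def n_def q_def G_def ..
  define b where "b = (\<lambda>j c. if c < n then G j c else 0)"
  have fs: "free_submodule n S k"
    unfolding free_submodule_def
  proof (intro exI[of _ b] conjI)
    show "\<forall>j<k. b j \<in> vecs n" by (simp add: b_def vecs_def)
    have eqf: "(\<lambda>c. if c < n then (\<Sum>j<k. a j * b j c) else 0) =
               (\<lambda>c. if c < n then (\<Sum>j<k. a j * G j c) else 0)" for a
      by (rule ext) (simp add: b_def)
    show "S = rspan n k b" unfolding S_eq rspan_def eqf ..
    show "lin_indep n k b" unfolding lin_indep_def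
    proof (intro allI impI)
      fix a j assume h: "\<forall>c<n. (\<Sum>j<k. a j * b j c) = 0" and j: "j < k"
      obtain z w where zw: "z < Q" "w < Q" "rho \<gamma> s e z = 0" "rho \<gamma> s e w = 1"
        using rho01 unfolding Q_def q_def by blast
      define f where "f i = (if i = j then w else z)" for i
      have fb: "\<forall>i<Suc k'. f i < length e ^ s" using zw unfolding f_def Q_def q_def by simp
      obtain c where c: "c < (length e ^ s)^Suc k'" "\<forall>i<Suc k'. G_alpha \<gamma> s e (Suc k') i c = rho \<gamma> s e (f i)"
        using G_col[OF fb, where g = \<gamma>] by blast
      have cn: "c < n" using c(1) unfolding n_def q_def k' .
      have "(\<Sum>i<k. a i * b i c) = (\<Sum>i<k. (if i = j then a i else 0))"
      proof (intro sum.cong refl)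
        fix i assume "i \<in> {..<k}"
        then have "b i c = rho \<gamma> s e (f i)" using c cn k' unfolding b_def G_def by simp
        then show "a i * b i c = (if i = j then a i else 0)" using zw unfolding f_def by simp
      qed
      also have "\<dots> = a j" using j by simp
      finally show "a j = 0" using h cn by simp
    qed
  qed
  have "\<exists>C'. free_submodule n C' k \<and> S \<subseteq> C'" using fs by blast
  then have rk: "code_rank n S \<le> k" unfolding code_rank_def by (rule Least_le)
  define v where "v = (\<lambda>c. if c < n then (\<Sum>j<k. (if j = k' then \<gamma>^(s-1) else 0) * G j c) else 0)"
  have vS: "v \<in> S" unfolding S_eq rspan_def v_def
    by (intro CollectI exI[of _ "\<lambda>j. if j = k' then \<gamma>^(s-1) else 0"]) simp
  have vc: "v c = \<gamma>^(s-1) * rho \<gamma> s e (c mod Q)" if "c < n" for c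
  proof -
    have "v c = (\<Sum>j<k. (if j = k' then \<gamma>^(s-1) else 0) * G j c)"
      unfolding v_def using that by simp
    also have "\<dots> = (\<Sum>j<k. (if j = k' then \<gamma>^(s-1) * G j c else 0))"
      by (intro sum.cong) auto
    also have "\<dots> = \<gamma>^(s-1) * G k' c" using k' by simp
    also have "G k' c = rho \<gamma> s e (c mod Q)"
      unfolding G_def k' using G_last[of e s c k' \<gamma>] Qp that nQ k' unfolding Q_def q_def by simp
    finally show ?thesis .
  qed
  have vz: "v c \<noteq> 0 \<longleftrightarrow> \<not> q dvd c" if "c < n" for c
  proof -
    have "c mod Q < Q" using Qp by simp
    then have "v c = 0 \<longleftrightarrow> c mod Q mod q = 0" using key[of "c mod Q"] vc[OF that]
      unfolding Q_def q_def by simp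
    also have "c mod Q mod q = c mod q" unfolding Q_def using s1
      by (intro mod_mod_cancel) (simp add: dvd_power)
    finally show ?thesis by (simp add: dvd_eq_mod_eq_0)
  qed
  have "Q \<le> n" using power_increasing[of 1 k Q] nQ assms(3) Qp by simp
  then have n1: "1 < n" using Qq q2' by simp
  have v1: "v \<noteq> (\<lambda>_. 0)"
  proof
    assume "v = (\<lambda>_. 0)"
    then have "v 1 = 0" by simp
    moreover have "\<not> q dvd 1" using q2' by simp
    ultimately show False using vz[OF n1] by simp
  qed
  define N' where "N' = s * k"
  have N'1: "N' \<ge> 1" unfolding N'_def using s1 assms(3) by simp
  have kN: "k \<le> N'" unfolding N'_def using s1 by simp
  have nN: "n = q ^ N'" unfolding n_def N'_def by (simp add: power_mult)
  define M where "M = q ^ (N' - 1)"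
  have nM: "n = q * M" unfolding nN M_def using N'1 by (simp flip: power_Suc)
  have hw: "hweight n v = q * M - M"
  proof -
    have "{c. c < n \<and> v c \<noteq> 0} = {c. c < q*M \<and> \<not> q dvd c}" using vz nM by auto
    then show ?thesis unfolding hweight_def using card_nondvd[of q M] q2' by simp
  qed
  have sub: "{hweight n u | u. u \<in> S \<and> u \<noteq> (\<lambda>_. 0)} \<subseteq> {..n}"
  proof
    fix x assume "x \<in> {hweight n u | u. u \<in> S \<and> u \<noteq> (\<lambda>_. 0)}"
    then obtain u :: "nat \<Rightarrow> 'a" where "x = hweight n u" by blast
    then show "x \<in> {..n}" using hweight_le[of n u] by simp
  qed
  have fin: "finite {hweight n u | u. u \<in> S \<and> u \<noteq> (\<lambda>_. 0)}"
    by (rule finite_subset[OF sub]) simp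
  have "hweight n v \<in> {hweight n u | u. u \<in> S \<and> u \<noteq> (\<lambda>_. 0)}" using vS v1 by blast
  then have "Min {hweight n u | u. u \<in> S \<and> u \<noteq> (\<lambda>_. 0)} \<le> hweight n v" by (rule Min_le[OF fin])
  then have dle: "min_hdist n S \<le> q * M - M" unfolding min_hdist_def hw .
  define D where "D = q * M - M"
  define r where "r = code_rank n S"
  define d where "d = min_hdist n S"
  have qp: "real q > 0" using q2' by simp
  have t1: "(\<Sum>i<r. real_of_int \<lceil>real d / real q ^ i\<rceil>) \<le> (\<Sum>i<r. real_of_int \<lceil>real D / real q ^ i\<rceil>)"
    using dle unfolding d_def D_def
    by (intro sum_mono) (simp add: ceiling_mono divide_right_mono qp)
  have t2: "(\<Sum>i<r. real_of_int \<lceil>real D / real q ^ i\<rceil>) \<le> (\<Sum>i<k. real_of_int \<lceil>real D / real q ^ i\<rceil>)"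
  proof (rule sum_mono2)
    show "{..<r} \<subseteq> {..<k}" using rk unfolding r_def by auto
  next
    fix i
    have "0 \<le> real D / real q ^ i" using qp by simp
    then show "0 \<le> real_of_int \<lceil>real D / real q ^ i\<rceil>"
      using le_of_int_ceiling[of "real D / real q ^ i"] by linarith
  qed simp
  have t3: "real_of_int \<lceil>real D / real q ^ i\<rceil> = real q ^ (N' - i) - real q ^ (N' - Suc i)" if "i < k" for i
  proof -
    define t where "t = N' - Suc i"
    have Nt: "N' = i + Suc t" unfolding t_def using that kN by simp
    have MD: "M \<le> q * M" using q2' by simp
    have qM: "q * M = q ^ N'" using nM nN by simp
    have e1: "real (q*M) = real q ^ N'" unfolding qM by simp
    have e2: "real M = real q ^ (N'-1)" unfolding M_def by simp
    have "real D = real (q*M) - real M" unfolding D_def by (rule of_nat_diff[OF MD])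
    also have "\<dots> = real q ^ N' - real q ^ (N' - 1)" by (simp only: e1 e2)
    also have "\<dots> = real q ^ i * (real q ^ Suc t - real q ^ t)" unfolding Nt
      by (simp add: power_add algebra_simps)
    finally have "real D / real q ^ i = real q ^ Suc t - real q ^ t" using qp by simp
    also have "\<dots> = real_of_int (int (q ^ Suc t) - int (q ^ t))" by simp
    finally have eq: "real D / real q ^ i = real_of_int (int (q ^ Suc t) - int (q ^ t))" .
    have "\<lceil>real D / real q ^ i\<rceil> = int (q ^ Suc t) - int (q ^ t)" unfolding eq by (rule ceiling_of_int)
    moreover have "N' - i = Suc t" "N' - Suc i = t" using Nt by simp_all
    ultimately show ?thesis by simp
  qed
  have t4: "(\<Sum>i<k. real_of_int \<lceil>real D / real q ^ i\<rceil>) = real q ^ N' - real q ^ (N' - k)"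
  proof -
    have "(\<Sum>i<k. real_of_int \<lceil>real D / real q ^ i\<rceil>) = (\<Sum>i<k. real q ^ (N' - i) - real q ^ (N' - Suc i))"
      using t3 by (intro sum.cong) auto
    also have "\<dots> = real q ^ (N' - 0) - real q ^ (N' - k)"
      by (rule sum_lessThan_telescope'[where f = "\<lambda>i. real q ^ (N' - i)"])
    finally show ?thesis by simp
  qed
  have "(\<Sum>i<r. real_of_int \<lceil>real d / real q ^ i\<rceil>) < real n"
  proof -
    have "real q ^ (N' - k) > 0" using qp by simp
    moreover have "real n = real q ^ N'" unfolding nN by simp
    ultimately show ?thesis using t1 t2 t4 by linarith
  qed
  then show ?thesis unfolding r_def d_def S_def .
qed

end
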